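(* Let $X$ be a permutation graph, let $\mathfrak{to}(X)$ and $\mathfrak{to}(\overline X)$ be the sets of transitive orientations of $X$ and of its complement $\overline X$, and let $\mathfrak{to}(X,\overline X)=\mathfrak{to}(X)\times\mathfrak{to}(\overline X)$. The action of ${\rm Aut}(X)$ on $\mathfrak{to}(X,\overline X)$, given by $\pi\cdot(\to,\overline{\to})=(\pi(\to),\pi(\overline{\to}))$, is semiregular (every stabilizer is trivial).
   Context: A permutation graph is a graph $X$ such that both $X$ and $\overline X$ are comparability graphs (equivalently, the intersection graph of segments joining two parallel lines). A transitive orientation of a graph is an orientation of its edges which is a transitive relation. For $\pi\in{\rm Aut}(X)$ and a transitive orientation $\to$, the orientation $\pi(\to)$ is defined by: $x\to y$ implies $\pi(x)\,\pi(\to)\,\pi(y)$; note ${\rm Aut}(X)={\rm Aut}(\overline X)$. *)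

theory Defs
  imports Main
begin

definition simple_graph :: "'a set \<Rightarrow> ('a \<Rightarrow> 'a \<Rightarrow> bool) \<Rightarrow> bool" where
  "simple_graph V E \<longleftrightarrow>
     (\<forall>x y. E x y \<longrightarrow> x \<in> V \<and> y \<in> V) \<and>
     (\<forall>x y. E x y \<longrightarrow> E y x) \<and> (\<forall>x. \<not> E x x)"

definition compl_graph :: "'a set \<Rightarrow> ('a \<Rightarrow> 'a \<Rightarrow> bool) \<Rightarrow> 'a \<Rightarrow> 'a \<Rightarrow> bool" where
  "compl_graph V E x y \<longleftrightarrow> x \<in> V \<and> y \<in> V \<and> x \<noteq> y \<and> \<not> E x y"

definition orientation :: "('a \<Rightarrow> 'a \<Rightarrow> bool) \<Rightarrow> ('a \<times> 'a) set \<Rightarrow> bool" where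
  "orientation E R \<longleftrightarrow>
     (\<forall>x y. (x, y) \<in> R \<longrightarrow> E x y) \<and>
     (\<forall>x y. E x y \<longrightarrow> ((x, y) \<in> R \<longleftrightarrow> (y, x) \<notin> R))"

definition transitive_orientation :: "('a \<Rightarrow> 'a \<Rightarrow> bool) \<Rightarrow> ('a \<times> 'a) set \<Rightarrow> bool" where
  "transitive_orientation E R \<longleftrightarrow> orientation E R \<and> trans R"

definition trans_orients :: "('a \<Rightarrow> 'a \<Rightarrow> bool) \<Rightarrow> ('a \<times> 'a) set set" where
  "trans_orients E = {R. transitive_orientation E R}"

definition comparability_graph :: "'a set \<Rightarrow> ('a \<Rightarrow> 'a \<Rightarrow> bool) \<Rightarrow> bool" where
  "comparability_graph V E \<longleftrightarrow> (\<exists>R. transitive_orientation E R)"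

definition permutation_graph :: "'a set \<Rightarrow> ('a \<Rightarrow> 'a \<Rightarrow> bool) \<Rightarrow> bool" where
  "permutation_graph V E \<longleftrightarrow> finite V \<and> simple_graph V E \<and>
     comparability_graph V E \<and> comparability_graph V (compl_graph V E)"

definition graph_aut :: "'a set \<Rightarrow> ('a \<Rightarrow> 'a \<Rightarrow> bool) \<Rightarrow> ('a \<Rightarrow> 'a) set" where
  "graph_aut V E = {\<pi>. bij_betw \<pi> V V \<and> (\<forall>x\<in>V. \<forall>y\<in>V. E x y \<longleftrightarrow> E (\<pi> x) (\<pi> y))}"

definition orient_map :: "('a \<Rightarrow> 'a) \<Rightarrow> ('a \<times> 'a) set \<Rightarrow> ('a \<times> 'a) set" where
  "orient_map \<pi> R = (\<lambda>(x, y). (\<pi> x, \<pi> y)) ` R"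

end

theory Submission
  imports Defs
begin

lemma finite_order_aut_id:
  assumes fin: "finite V" and sub: "L \<subseteq> V \<times> V" and tr: "trans L"
    and irr: "\<And>x. (x,x) \<notin> L"
    and tot: "\<And>x y. x \<in> V \<Longrightarrow> y \<in> V \<Longrightarrow> x \<noteq> y \<Longrightarrow> (x,y) \<in> L \<or> (y,x) \<in> L"
    and bij: "bij_betw \<pi> V V"
    and pres: "\<And>x y. (x,y) \<in> L \<Longrightarrow> (\<pi> x, \<pi> y) \<in> L"
    and v: "v \<in> V"
  shows "\<pi> v = v"
proof -
  define f where "f = (\<lambda>v. card {u\<in>V. (u,v) \<in> L})"
  have lt: "f u < f w" if "(u,w) \<in> L" for u w
  proof -
    have s1: "insert u {x\<in>V. (x,u) \<in> L} \<subseteq> {x\<in>V. (x,w) \<in> L}"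
      using that tr sub unfolding trans_def by blast
    have f1: "finite {x\<in>V. (x,w) \<in> L}" using fin by simp
    have c1: "card (insert u {x\<in>V. (x,u) \<in> L}) \<le> card {x\<in>V. (x,w) \<in> L}"
      by (rule card_mono[OF f1 s1])
    have "card (insert u {x\<in>V. (x,u) \<in> L}) = Suc (card {x\<in>V. (x,u) \<in> L})"
      using fin irr by (intro card_insert_disjoint) auto
    then show ?thesis using c1 unfolding f_def by simp
  qed
  have inj: "inj_on f V"
  proof (rule inj_onI, rule ccontr)
    fix x y assume xy: "x \<in> V" "y \<in> V" "f x = f y" "x \<noteq> y"
    have "(x,y) \<in> L \<or> (y,x) \<in> L" using tot[OF xy(1) xy(2) xy(4)] .
    then show False
    proof
      assume "(x,y) \<in> L" then have "f x < f y" by (rule lt)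
      then show False using xy(3) by simp
    next
      assume "(y,x) \<in> L" then have "f y < f x" by (rule lt)
      then show False using xy(3) by simp
    qed
  qed
  have injpi: "inj_on \<pi> V" using bij by (rule bij_betw_imp_inj_on)
  have imV: "\<pi> ` V = V" using bij by (rule bij_betw_imp_surj_on)
  have le: "f x \<le> f (\<pi> x)" if "x \<in> V" for x
  proof -
    have s: "\<pi> ` {u\<in>V. (u,x) \<in> L} \<subseteq> {u\<in>V. (u,\<pi> x) \<in> L}"
    proof
      fix z assume "z \<in> \<pi> ` {u\<in>V. (u,x) \<in> L}"
      then obtain u where u: "u \<in> V" "(u,x) \<in> L" "z = \<pi> u" by blast
      have "(\<pi> u, \<pi> x) \<in> L" using pres[OF u(2)] .
      moreover have "\<pi> u \<in> V" using u(1) imV by blast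
      ultimately show "z \<in> {u\<in>V. (u,\<pi> x) \<in> L}" using u(3) by simp
    qed
    have i: "inj_on \<pi> {u\<in>V. (u,x) \<in> L}"
      using injpi by (rule inj_on_subset) simp
    have "finite {u\<in>V. (u,\<pi> x) \<in> L}" using fin by simp
    then show ?thesis unfolding f_def by (rule card_inj_on_le[OF i s])
  qed
  have "sum (f \<circ> \<pi>) V = sum f (\<pi> ` V)" using sum.reindex[OF injpi, of f] by simp
  also have "\<dots> = sum f V" using imV by simp
  finally have eqs: "sum f V = sum (f \<circ> \<pi>) V" by simp
  have "f v = (f \<circ> \<pi>) v"
    by (rule sum_mono_inv[OF eqs _ v fin]) (simp add: le)
  then have "f (\<pi> v) = f v" by simp
  moreover have "\<pi> v \<in> V" using v imV by blast
  ultimately show ?thesis using inj_onD[OF inj _ _ v] by blast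
qed

theorem mainTheorem5:
  fixes V :: "'a set" and E :: "'a \<Rightarrow> 'a \<Rightarrow> bool"
  assumes "permutation_graph V E"
  shows "\<forall>P \<in> trans_orients E \<times> trans_orients (compl_graph V E).
           \<forall>\<pi> \<in> graph_aut V E.
             (orient_map \<pi> (fst P), orient_map \<pi> (snd P)) = P \<longrightarrow> (\<forall>v\<in>V. \<pi> v = v)"
proof (intro ballI impI)
  fix P \<pi> v
  assume P: "P \<in> trans_orients E \<times> trans_orients (compl_graph V E)"
    and pi: "\<pi> \<in> graph_aut V E"
    and eq: "(orient_map \<pi> (fst P), orient_map \<pi> (snd P)) = P" and v: "v \<in> V"
  obtain R Rb where Pd: "P = (R, Rb)" by (cases P)
  have fin: "finite V" and sg: "simple_graph V E" using assms unfolding permutation_graph_def by auto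
  have tR: "transitive_orientation E R" and tRb: "transitive_orientation (compl_graph V E) Rb"
    using P Pd unfolding trans_orients_def by auto
  have oR: "\<And>x y. (x,y) \<in> R \<Longrightarrow> E x y" "\<And>x y. E x y \<Longrightarrow> ((x,y) \<in> R \<longleftrightarrow> (y,x) \<notin> R)"
    and trR: "trans R" using tR unfolding transitive_orientation_def orientation_def by auto
  have oRb: "\<And>x y. (x,y) \<in> Rb \<Longrightarrow> compl_graph V E x y"
    "\<And>x y. compl_graph V E x y \<Longrightarrow> ((x,y) \<in> Rb \<longleftrightarrow> (y,x) \<notin> Rb)"
    and trRb: "trans Rb" using tRb unfolding transitive_orientation_def orientation_def by auto
  have Ev: "\<And>x y. E x y \<Longrightarrow> x \<in> V \<and> y \<in> V" "\<And>x y. E x y \<Longrightarrow> E y x" "\<And>x. \<not> E x x"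
    using sg unfolding simple_graph_def by auto
  have nb1: "False" if "(x,y) \<in> R" "(x,y) \<in> Rb" for x y
    using oR(1)[OF that(1)] oRb(1)[OF that(2)] unfolding compl_graph_def by simp
  have nb2: "False" if "(x,y) \<in> R" "(y,x) \<in> Rb" for x y
    using Ev(2)[OF oR(1)[OF that(1)]] oRb(1)[OF that(2)] unfolding compl_graph_def by simp
  have nb3: "x \<noteq> y" if "(x,y) \<in> Rb" for x y
    using oRb(1)[OF that] unfolding compl_graph_def by simp
  have nb4: "x \<noteq> y" if "(x,y) \<in> R" for x y
    using oR(1)[OF that] Ev(3) by metis
  define L where "L = R \<union> Rb"
  have sub: "L \<subseteq> V \<times> V" unfolding L_def
  proof
    fix p assume "p \<in> R \<union> Rb"
    then show "p \<in> V \<times> V" using oR(1) oRb(1) Ev(1)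
      unfolding compl_graph_def by (cases p) blast
  qed
  have irr: "\<And>x. (x,x) \<notin> L" unfolding L_def using nb3 nb4 by blast
  have tot: "\<And>x y. x \<in> V \<Longrightarrow> y \<in> V \<Longrightarrow> x \<noteq> y \<Longrightarrow> (x,y) \<in> L \<or> (y,x) \<in> L"
  proof -
    fix x y assume xy: "x \<in> V" "y \<in> V" "x \<noteq> y"
    show "(x,y) \<in> L \<or> (y,x) \<in> L"
    proof (cases "E x y")
      case True then show ?thesis using oR(2)[OF True] unfolding L_def by blast
    next
      case False
      then have "compl_graph V E x y" using xy unfolding compl_graph_def by simp
      then show ?thesis using oRb(2) unfolding L_def by blast
    qed
  qed
  have tr: "trans L"
  proof (rule transI)
    fix a b c assume ab: "(a,b) \<in> L" and bc: "(b,c) \<in> L"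
    have aV: "a \<in> V" and cV: "c \<in> V" using ab bc sub by auto
    show "(a,c) \<in> L"
    proof (cases "(a,b) \<in> R")
      case abR: True
      show ?thesis
      proof (cases "(b,c) \<in> R")
        case True then show ?thesis using abR trR unfolding L_def trans_def by blast
      next
        case False
        then have bcB: "(b,c) \<in> Rb" using bc L_def by auto
        show ?thesis
        proof (rule ccontr)
          assume nac: "(a,c) \<notin> L"
          have "a \<noteq> c" using abR bcB nb1 nb2 by metis
          then have "(c,a) \<in> L" using tot aV cV nac by blast
          then show False
          proof (unfold L_def, elim UnE)
            assume "(c,a) \<in> R"
            then have "(c,b) \<in> R" using abR trR unfolding trans_def by blast
            then show False using bcB nb1 nb2 by metis
          next
            assume "(c,a) \<in> Rb"
            then have "(b,a) \<in> Rb" using bcB trRb unfolding trans_def by blast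
            then show False using abR nb1 nb2 by metis
          qed
        qed
      qed
    next
      case False
      then have abB: "(a,b) \<in> Rb" using ab L_def by auto
      show ?thesis
      proof (cases "(b,c) \<in> Rb")
        case True then show ?thesis using abB trRb unfolding L_def trans_def by blast
      next
        case False
        then have bcR: "(b,c) \<in> R" using bc L_def by auto
        show ?thesis
        proof (rule ccontr)
          assume nac: "(a,c) \<notin> L"
          have "a \<noteq> c" using abB bcR nb1 nb2 by metis
          then have "(c,a) \<in> L" using tot aV cV nac by blast
          then show False
          proof (unfold L_def, elim UnE)
            assume "(c,a) \<in> R"
            then have "(b,a) \<in> R" using bcR trR unfolding trans_def by blast
            then show False using abB nb1 nb2 by metis
          next
            assume "(c,a) \<in> Rb"
            then have "(c,b) \<in> Rb" using abB trRb unfolding trans_def by blast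
            then show False using bcR nb1 nb2 by metis
          qed
        qed
      qed
    qed
  qed
  have bij: "bij_betw \<pi> V V" using pi unfolding graph_aut_def by auto
  have eR: "orient_map \<pi> R = R" and eRb: "orient_map \<pi> Rb = Rb" using eq Pd by auto
  have pres: "\<And>x y. (x,y) \<in> L \<Longrightarrow> (\<pi> x, \<pi> y) \<in> L"
  proof -
    fix x y assume "(x,y) \<in> L"
    then show "(\<pi> x, \<pi> y) \<in> L" unfolding L_def
    proof (elim UnE)
      assume "(x,y) \<in> R"
      then have "(\<pi> x, \<pi> y) \<in> orient_map \<pi> R" unfolding orient_map_def by force
      then show "(\<pi> x, \<pi> y) \<in> R \<union> Rb" using eR by simp
    next
      assume "(x,y) \<in> Rb"
      then have "(\<pi> x, \<pi> y) \<in> orient_map \<pi> Rb" unfolding orient_map_def by force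
      then show "(\<pi> x, \<pi> y) \<in> R \<union> Rb" using eRb by simp
    qed
  qed
  show "\<pi> v = v" using finite_order_aut_id[OF fin sub tr irr tot bij pres v] .
qed

end
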